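(* Let $\Gamma$ be a finite connected regular graph with valency $k\ge 2$ and diameter $D\ge 3$. Then $\Gamma$ has an eigenvalue $\theta\neq k$ (of its adjacency matrix) satisfying $|\theta|>\sqrt{k/2}$.
   Context: Graphs are finite, undirected and simple; the eigenvalues of a graph are those of its adjacency matrix. *)

theory Defs
  imports Complex_Main "Jordan_Normal_Form.Char_Poly"
begin

definition simple_graph :: "nat \<Rightarrow> (nat \<Rightarrow> nat \<Rightarrow> bool) \<Rightarrow> bool" where
  "simple_graph n E \<longleftrightarrow>
     (\<forall>i j. E i j \<longrightarrow> i < n \<and> j < n \<and> i \<noteq> j \<and> E j i)"

definition neighbours :: "nat \<Rightarrow> (nat \<Rightarrow> nat \<Rightarrow> bool) \<Rightarrow> nat \<Rightarrow> nat set" where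
  "neighbours n E i = {j. j < n \<and> E i j}"

definition regular_graph :: "nat \<Rightarrow> (nat \<Rightarrow> nat \<Rightarrow> bool) \<Rightarrow> nat \<Rightarrow> bool" where
  "regular_graph n E k \<longleftrightarrow> (\<forall>i<n. card (neighbours n E i) = k)"

definition connected_graph :: "nat \<Rightarrow> (nat \<Rightarrow> nat \<Rightarrow> bool) \<Rightarrow> bool" where
  "connected_graph n E \<longleftrightarrow> 0 < n \<and> (\<forall>u<n. \<forall>v<n. \<exists>m. (E ^^ m) u v)"

definition graph_dist :: "(nat \<Rightarrow> nat \<Rightarrow> bool) \<Rightarrow> nat \<Rightarrow> nat \<Rightarrow> nat" where
  "graph_dist E u v = (LEAST m. (E ^^ m) u v)"

definition diameter :: "nat \<Rightarrow> (nat \<Rightarrow> nat \<Rightarrow> bool) \<Rightarrow> nat" where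
  "diameter n E = Max {graph_dist E u v | u v. u < n \<and> v < n}"

definition adj_matrix :: "nat \<Rightarrow> (nat \<Rightarrow> nat \<Rightarrow> bool) \<Rightarrow> real mat" where
  "adj_matrix n E = mat n n (\<lambda>(i, j). if E i j then 1 else 0)"

end

theory Submission
  imports Defs "HOL-Analysis.Function_Topology"
begin

definition ap :: "nat \<Rightarrow> (nat \<Rightarrow> nat \<Rightarrow> bool) \<Rightarrow> (nat \<Rightarrow> real) \<Rightarrow> nat \<Rightarrow> real" where
  "ap n E f i = (\<Sum>j<n. if E i j then f j else 0)"

definition ip :: "nat \<Rightarrow> (nat \<Rightarrow> real) \<Rightarrow> (nat \<Rightarrow> real) \<Rightarrow> real" where
  "ip n f g = (\<Sum>i<n. f i * g i)"

lemma sg_sym: "simple_graph n E \<Longrightarrow> E i j \<longleftrightarrow> E j i"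
  unfolding simple_graph_def by blast

lemma sg_lt: "simple_graph n E \<Longrightarrow> E i j \<Longrightarrow> i < n \<and> j < n"
  unfolding simple_graph_def by blast

lemma ap_out: assumes "simple_graph n E" "n \<le> i" shows "ap n E f i = 0"
proof -
  have "\<forall>j. \<not> E i j" using sg_lt[OF assms(1), of i] assms(2) by auto
  then show ?thesis unfolding ap_def by simp
qed

lemma ap_sym:
  assumes sg: "simple_graph n E"
  shows "ip n (ap n E f) g = ip n f (ap n E g)"
proof -
  have "ip n (ap n E f) g = (\<Sum>i<n. \<Sum>j<n. if E i j then f j * g i else 0)"
    unfolding ip_def ap_def by (auto simp: sum_distrib_right intro!: sum.cong)
  also have "\<dots> = (\<Sum>j<n. \<Sum>i<n. if E i j then f j * g i else 0)"
    by (rule sum.swap)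
  also have "\<dots> = ip n f (ap n E g)"
    unfolding ip_def ap_def using sg_sym[OF sg]
    by (auto simp: sum_distrib_left intro!: sum.cong)
  finally show ?thesis .
qed

lemma ap_lin: "ap n E (\<lambda>i. f i + t * h i) i = ap n E f i + t * ap n E h i"
  unfolding ap_def sum_distrib_left sum.distrib[symmetric] by (rule sum.cong) auto

lemma ap_scale: "ap n E (\<lambda>i. f i / s) i = ap n E f i / s"
  unfolding ap_def sum_divide_distrib by (rule sum.cong) auto

lemma ip_expand: "ip n (\<lambda>i. f i + t * h i) (\<lambda>i. f i + t * h i) = ip n f f + 2*t*ip n f h + t^2 * ip n h h"
proof -
  have "ip n (\<lambda>i. f i + t * h i) (\<lambda>i. f i + t * h i) = (\<Sum>i<n. f i * f i + 2*t*(f i * h i) + t^2*(h i * h i))"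
    unfolding ip_def by (rule sum.cong) (auto simp: algebra_simps power2_eq_square)
  then show ?thesis unfolding ip_def by (simp add: sum.distrib sum_distrib_left)
qed

lemma ip_diff: "ip n (\<lambda>i. m * f i - a i) h = m * ip n f h - ip n a h"
  unfolding ip_def by (simp add: sum_subtractf sum_distrib_left algebra_simps)

lemma ip_nonneg: "ip n f f \<ge> 0"
  unfolding ip_def by (auto intro: sum_nonneg)

lemma ip_zero: "ip n f f = 0 \<Longrightarrow> i < n \<Longrightarrow> f i = 0"
  unfolding ip_def by (subst (asm) sum_nonneg_eq_0_iff) auto

lemma ip_single: "i < n \<Longrightarrow> (f i)^2 \<le> ip n f f"
  unfolding ip_def power2_eq_square by (rule member_le_sum) auto

lemma ap_sum:
  assumes sg: "simple_graph n E" and rg: "regular_graph n E k"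
  shows "(\<Sum>i<n. ap n E f i) = real k * (\<Sum>i<n. f i)"
proof -
  have "(\<Sum>i<n. ap n E f i) = (\<Sum>j<n. \<Sum>i<n. if E i j then f j else 0)"
    unfolding ap_def by (rule sum.swap)
  also have "\<dots> = (\<Sum>j<n. f j * real k)"
  proof (rule sum.cong)
    fix j assume j: "j \<in> {..<n}"
    have "(\<Sum>i<n. if E i j then f j else 0) = (\<Sum>i\<in>{i\<in>{..<n}. E i j}. f j)"
      by (rule sum.inter_filter[symmetric]) simp
    also have "\<dots> = real (card {i\<in>{..<n}. E i j}) * f j" by simp
    also have "{i\<in>{..<n}. E i j} = neighbours n E j"
      unfolding neighbours_def using sg_sym[OF sg] by auto
    also have "card (neighbours n E j) = k" using rg j unfolding regular_graph_def by auto
    finally show "(\<Sum>i<n. if E i j then f j else 0) = f j * real k" by (simp add: mult.commute)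
  qed simp
  finally show ?thesis by (simp add: sum_distrib_left mult.commute)
qed

lemma max_principle:
  assumes sg: "simple_graph n E" and cn: "connected_graph n E" and rg: "regular_graph n E k"
    and ev: "\<forall>i<n. ap n E x i = real k * x i" and s0: "(\<Sum>i<n. x i) = 0"
  shows "\<forall>i<n. x i = 0"
proof -
  have n0: "0 < n" using cn unfolding connected_graph_def by auto
  define m where "m = Max (x ` {..<n})"
  have fin: "finite (x ` {..<n})" and ne: "x ` {..<n} \<noteq> {}" using n0 by auto
  have "m \<in> x ` {..<n}" unfolding m_def using Max_in[OF fin ne] .
  then obtain i0 where i0: "i0 < n" "x i0 = m" by auto
  have le: "x j \<le> m" if "j < n" for j unfolding m_def by (rule Max_ge[OF fin]) (use that in auto)
  have clos: "x j = m" if i: "i < n" "x i = m" and e: "E i j" for i j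
  proof (rule ccontr)
    assume "x j \<noteq> m"
    have jn: "j < n" using sg_lt[OF sg e] by auto
    then have lt: "x j < m" using le \<open>x j \<noteq> m\<close> by fastforce
    have "ap n E x i = (\<Sum>l\<in>{l\<in>{..<n}. E i l}. x l)"
      unfolding ap_def by (rule sum.inter_filter[symmetric]) simp
    also have "{l\<in>{..<n}. E i l} = neighbours n E i" unfolding neighbours_def by blast
    also have "(\<Sum>l\<in>neighbours n E i. x l) < (\<Sum>l\<in>neighbours n E i. m)"
    proof (rule sum_strict_mono_ex1)
      show "finite (neighbours n E i)" unfolding neighbours_def by simp
      show "\<forall>l\<in>neighbours n E i. x l \<le> m" unfolding neighbours_def using le by blast
      show "\<exists>l\<in>neighbours n E i. x l < m" unfolding neighbours_def using jn e lt by blast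
    qed
    also have "\<dots> = real k * m" using rg i unfolding regular_graph_def by auto
    finally show False using ev i by auto
  qed
  have walk: "v < n \<and> x v = m" if "(E ^^ l) i0 v" for l v
    using that
  proof (induction l arbitrary: v)
    case 0
    then show ?case using i0 by simp
  next
    case (Suc l)
    then obtain w where w: "(E ^^ l) i0 w" "E w v" by auto
    then have "w < n \<and> x w = m" using Suc.IH by blast
    then have wn: "w < n" "x w = m" by auto
    have "x v = m" by (rule clos[OF wn w(2)])
    moreover have "v < n" using sg_lt[OF sg w(2)] by simp
    ultimately show ?case by simp
  qed
  have allm: "x v = m" if "v < n" for v
  proof -
    have "\<forall>u<n. \<forall>v<n. \<exists>m. (E ^^ m) u v" using cn unfolding connected_graph_def by simp
    then have "\<exists>l. (E ^^ l) i0 v" using i0(1) that by simp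
    then obtain l where "(E ^^ l) i0 v" ..
    then show ?thesis using walk by blast
  qed
  have "(\<Sum>i<n. x i) = (\<Sum>i<n. m)" by (rule sum.cong) (auto simp: allm)
  then have "(\<Sum>i<n. x i) = real n * m" by simp
  then have "m = 0" using s0 n0 by simp
  then show ?thesis using allm by simp
qed

lemma ap_alt: "ap n E f i = (\<Sum>j<n. (if E i j then 1 else 0) * f j)"
  unfolding ap_def by (rule sum.cong) auto

lemma ip_scale: "ip n (\<lambda>i. f i / s) (\<lambda>i. f i / s) = ip n f f / s^2"
  unfolding ip_def by (simp add: sum_divide_distrib power2_eq_square)

lemma quad_zero:
  fixes a b :: real
  assumes a0: "a \<ge> 0" and all: "\<forall>t. 0 \<le> 2*t*a + t^2*b"
  shows "a = 0"
proof (rule ccontr)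
  assume "a \<noteq> 0"
  with a0 have ap: "a > 0" by simp
  define s where "s = \<bar>b\<bar> + 1"
  have s0: "s > 0" unfolding s_def by simp
  define t where "t = - a / s"
  have eq: "2*t*a + t^2*b = a^2/s^2 * (b - 2*s)"
    using s0 unfolding t_def by (simp add: field_simps power2_eq_square)
  have "a^2/s^2 > 0" using ap s0 by simp
  moreover have "b - 2*s < 0" unfolding s_def by (cases "b \<ge> 0") auto
  ultimately have "a^2/s^2 * (b - 2*s) < 0" by (rule mult_pos_neg)
  with eq all show False by (metis not_le)
qed

lemma eig_final:
  assumes sg: "simple_graph n E" and cn: "connected_graph n E" and rg: "regular_graph n E k"
    and k2: "k \<ge> 2" and s0: "(\<Sum>i<n. x i) = 0" and nz: "i < n" "x i \<noteq> 0"
    and ev: "\<forall>i<n. ap n E x i = \<theta> * x i" and th: "real k \<le> \<theta>^2"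
  shows "\<exists>\<theta>. eigenvalue (adj_matrix n E) \<theta> \<and> \<theta> \<noteq> real k \<and> \<bar>\<theta>\<bar> > sqrt (real k / 2)"
proof (intro exI conjI)
  show "eigenvalue (adj_matrix n E) \<theta>" unfolding eigenvalue_def eigenvector_def
  proof (intro exI conjI)
    show "vec n x \<in> carrier_vec (dim_row (adj_matrix n E))" by (simp add: adj_matrix_def)
    show "vec n x \<noteq> 0\<^sub>v (dim_row (adj_matrix n E))"
    proof
      assume "vec n x = 0\<^sub>v (dim_row (adj_matrix n E))"
      then have "vec n x $ i = 0\<^sub>v n $ i" by (simp add: adj_matrix_def)
      with nz show False by simp
    qed
    show "adj_matrix n E *\<^sub>v vec n x = \<theta> \<cdot>\<^sub>v vec n x"
    proof (rule eq_vecI)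
      fix j assume "j < dim_vec (\<theta> \<cdot>\<^sub>v vec n x)"
      then have j: "j < n" by simp
      have "(adj_matrix n E *\<^sub>v vec n x) $ j = (\<Sum>l<n. (if E j l then 1 else 0) * x l)"
        using j by (simp add: adj_matrix_def scalar_prod_def lessThan_atLeast0)
      also have "\<dots> = ap n E x j" by (simp add: ap_alt)
      also have "\<dots> = \<theta> * x j" using ev j by simp
      finally show "(adj_matrix n E *\<^sub>v vec n x) $ j = (\<theta> \<cdot>\<^sub>v vec n x) $ j" using j by simp
    qed (simp add: adj_matrix_def)
  qed
  show "\<theta> \<noteq> real k"
  proof
    assume "\<theta> = real k"
    then have "\<forall>i<n. ap n E x i = real k * x i" using ev by simp
    from max_principle[OF sg cn rg this s0] nz show False by simp
  qed
  have "sqrt (real k / 2) < sqrt (real k)" using k2 by simp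
  also have "sqrt (real k) \<le> sqrt (\<theta>^2)" by (rule real_sqrt_le_mono[OF th])
  also have "sqrt (\<theta>^2) = \<bar>\<theta>\<bar>" by simp
  finally show "\<bar>\<theta>\<bar> > sqrt (real k / 2)" .
qed

definition bx :: "nat \<Rightarrow> (nat \<Rightarrow> real) set" where
 "bx n = PiE UNIV (\<lambda>i. if i < n then {-1..1} else {0})"

lemma compact_bx: "compact (bx n)"
proof -
  have "compactin (product_topology (\<lambda>_. euclidean) UNIV) (bx n)"
    unfolding bx_def compactin_PiE by auto
  then show ?thesis by (simp add: euclidean_product_topology)
qed

lemma cont_ip: "continuous_on UNIV (\<lambda>f::nat\<Rightarrow>real. ip n f f)"
  unfolding ip_def by (intro continuous_intros continuous_on_product_coordinates)

lemma cont_sum: "continuous_on UNIV (\<lambda>f::nat\<Rightarrow>real. (\<Sum>i<n. f i))"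
  by (intro continuous_intros continuous_on_product_coordinates)

lemma cont_Q: "continuous_on UNIV (\<lambda>f::nat\<Rightarrow>real. ip n (ap n E f) (ap n E f))"
  unfolding ip_def ap_alt by (intro continuous_intros continuous_on_product_coordinates)

lemma bx_mem: "f \<in> bx n \<longleftrightarrow> (\<forall>i. if i < n then -1 \<le> f i \<and> f i \<le> 1 else f i = 0)"
  unfolding bx_def by (auto simp: PiE_iff split: if_splits)

theorem lemma3p1:
  fixes n k :: nat and E :: "nat \<Rightarrow> nat \<Rightarrow> bool"
  assumes "simple_graph n E"
    and "connected_graph n E"
    and "regular_graph n E k"
    and "k \<ge> 2"
    and "diameter n E \<ge> 3"
  shows "\<exists>\<theta>. eigenvalue (adj_matrix n E) \<theta> \<and> \<theta> \<noteq> real k \<and> \<bar>\<theta>\<bar> > sqrt (real k / 2)"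
proof -
  note sg = assms(1) and cn = assms(2) and rg = assms(3) and k2 = assms(4)
  have n0: "0 < n" using cn unfolding connected_graph_def by auto
  obtain u v where uv: "u < n" "v < n" "u \<noteq> v" "\<And>w. \<not> (E u w \<and> E w v)"
  proof -
    let ?D = "{graph_dist E u v | u v. u < n \<and> v < n}"
    have "?D = (\<lambda>(u,v). graph_dist E u v) ` ({..<n} \<times> {..<n})" by auto
    then have fin: "finite ?D" by simp
    have ne: "?D \<noteq> {}" using n0 by auto
    have "Max ?D \<in> ?D" using Max_in[OF fin ne] .
    then obtain u v where u: "u < n" "v < n" "graph_dist E u v = diameter n E"
      unfolding diameter_def by auto
    with assms(5) have d3: "3 \<le> graph_dist E u v" by simp
    have nw: "\<not> (E ^^ l) u v" if "l < 3" for l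
    proof
      assume "(E ^^ l) u v"
      then have "graph_dist E u v \<le> l" unfolding graph_dist_def by (rule Least_le)
      with d3 that show False by simp
    qed
    have "u \<noteq> v" using nw[of 0] by auto
    moreover have "\<not> (E u w \<and> E w v)" for w
    proof
      assume "E u w \<and> E w v"
      then have "(E ^^ 2) u v" by (auto simp: numeral_2_eq_2)
      with nw[of 2] show False by simp
    qed
    ultimately show ?thesis using that u by blast
  qed
  define W0 where "W0 = {g::nat\<Rightarrow>real. (\<forall>i. n \<le> i \<longrightarrow> g i = 0) \<and> (\<Sum>i<n. g i) = 0}"
  define Q where "Q = (\<lambda>f. ip n (ap n E f) (ap n E f))"
  define S where "S = bx n \<inter> {f. ip n f f = 1} \<inter> {f. (\<Sum>i<n. f i) = 0}"
  have S_sub: "S \<subseteq> W0"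
  proof
    fix g assume g: "g \<in> S"
    have "\<forall>i. n \<le> i \<longrightarrow> g i = 0"
    proof (intro allI impI)
      fix i assume "n \<le> i"
      moreover have "g \<in> bx n" using g unfolding S_def by blast
      then have "if i < n then -1 \<le> g i \<and> g i \<le> 1 else g i = 0" unfolding bx_mem by blast
      ultimately show "g i = 0" by simp
    qed
    then show "g \<in> W0" using g unfolding S_def W0_def by simp
  qed
  have Q0: "Q g \<ge> 0" for g unfolding Q_def by (rule ip_nonneg)
  have normalize: "(\<lambda>i. g i / sqrt (ip n g g)) \<in> S" if g: "g \<in> W0" "ip n g g > 0" for g
  proof -
    let ?s = "sqrt (ip n g g)"
    let ?h = "\<lambda>i. g i / ?s"
    have ih: "ip n ?h ?h = 1" using g(2) by (simp add: ip_scale)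
    have sh: "(\<Sum>i<n. ?h i) = 0" using g(1) unfolding W0_def by (simp add: sum_divide_distrib[symmetric])
    have "?h \<in> bx n" unfolding bx_mem
    proof
      fix i
      show "if i < n then -1 \<le> ?h i \<and> ?h i \<le> 1 else ?h i = 0"
      proof (cases "i < n")
        case True
        have "(?h i)^2 \<le> 1" using ip_single[OF True, of ?h] ih by simp
        then have "\<bar>?h i\<bar> \<le> 1" by (simp add: abs_square_le_1)
        then have "-1 \<le> ?h i \<and> ?h i \<le> 1" by arith
        then show ?thesis by (simp only: True if_True)
      next
        case False
        then show ?thesis using g(1) unfolding W0_def by auto
      qed
    qed
    then show ?thesis using ih sh unfolding S_def by auto
  qed
  define d where "d = (\<lambda>i::nat. if i = u then 1 else if i = v then -1 else (0::real))"
  have dW: "d \<in> W0"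
  proof -
    have "(\<Sum>i<n. d i) = (\<Sum>i<n. (if i = u then 1 else 0) - (if i = v then 1 else 0))"
      unfolding d_def by (rule sum.cong) (use uv(3) in auto)
    also have "\<dots> = 0" using uv(1,2) by (simp add: sum_subtractf)
    finally show ?thesis using uv unfolding W0_def d_def by auto
  qed
  have dd: "ip n d d = 2"
  proof -
    have "ip n d d = (\<Sum>i<n. (if i = u then 1 else 0) + (if i = v then 1 else 0))"
      unfolding ip_def d_def by (rule sum.cong) (use uv(3) in auto)
    also have "\<dots> = 2" using uv(1,2) by (simp add: sum.distrib)
    finally show ?thesis .
  qed
  have apd: "ap n E d i = (if E i u then 1 else 0) - (if E i v then 1 else 0)" for i
  proof -
    have "ap n E d i = (\<Sum>j<n. (if j = u then (if E i u then 1 else 0) else 0) - (if j = v then (if E i v then 1 else 0) else 0))"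
      unfolding ap_def d_def by (rule sum.cong) (use uv(3) in auto)
    also have "\<dots> = (if E i u then 1 else 0) - (if E i v then 1 else 0)"
      using uv(1,2) by (simp add: sum_subtractf)
    finally show ?thesis .
  qed
  have cardN: "card {i\<in>{..<n}. E i w} = k" if "w < n" for w
  proof -
    have "{i\<in>{..<n}. E i w} = neighbours n E w" unfolding neighbours_def using sg_sym[OF sg] by auto
    then show ?thesis using rg that unfolding regular_graph_def by simp
  qed
  have Qd: "Q d = 2 * real k"
  proof -
    have "Q d = (\<Sum>i<n. (if E i u then 1 else 0) + (if E i v then 1 else 0))"
      unfolding Q_def ip_def apd
    proof (rule sum.cong)
      fix i
      have "\<not> (E i u \<and> E i v)" using uv(4)[of i] sg_sym[OF sg] by blast
      then show "((if E i u then 1 else 0) - (if E i v then 1 else 0)) * ((if E i u then 1 else 0) - (if E i v then 1 else 0)) = (if E i u then 1 else 0) + (if E i v then (1::real) else 0)"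
        by auto
    qed simp
    also have "\<dots> = real (card {i\<in>{..<n}. E i u}) + real (card {i\<in>{..<n}. E i v})"
      by (simp add: sum.distrib sum.inter_filter[symmetric])
    also have "\<dots> = 2 * real k" using cardN uv(1,2) by simp
    finally show ?thesis .
  qed
  have Sne: "S \<noteq> {}" using normalize[OF dW] dd by auto
  have cS: "compact S" unfolding S_def
    by (intro compact_Int_closed compact_bx closed_Collect_eq cont_ip cont_sum continuous_on_const)
  obtain f where fS: "f \<in> S" and fmax: "\<And>g. g \<in> S \<Longrightarrow> Q g \<le> Q f"
    using continuous_attains_sup[OF cS Sne continuous_on_subset[OF cont_Q subset_UNIV]]
    unfolding Q_def by blast
  define \<mu> where "\<mu> = Q f"
  have mu0: "\<mu> \<ge> 0" unfolding \<mu>_def by (rule Q0)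
  have psd: "Q g \<le> \<mu> * ip n g g" if g: "g \<in> W0" for g
  proof (cases "ip n g g = 0")
    case True
    then have "\<forall>i<n. g i = 0" using ip_zero by blast
    then have "\<forall>i. ap n E g i = 0" unfolding ap_def by (auto intro!: sum.neutral)
    then have "Q g = 0" unfolding Q_def ip_def by simp
    then show ?thesis using True by simp
  next
    case False
    then have gp: "ip n g g > 0" using ip_nonneg[of n g] by simp
    let ?s = "sqrt (ip n g g)"
    have "Q (\<lambda>i. g i / ?s) \<le> \<mu>" unfolding \<mu>_def by (rule fmax[OF normalize[OF g gp]])
    moreover have "Q (\<lambda>i. g i / ?s) = Q g / ip n g g"
      unfolding Q_def ap_scale using gp by (simp add: ip_scale)
    ultimately show ?thesis using gp by (simp add: field_simps)
  qed
  have muk: "real k \<le> \<mu>" using psd[OF dW] Qd dd by simp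
  have fW: "f \<in> W0" using fS S_sub by auto
  have ff: "ip n f f = 1" using fS unfolding S_def by simp
  define h where "h = (\<lambda>i. \<mu> * f i - ap n E (ap n E f) i)"
  have hW: "h \<in> W0"
  proof -
    have "(\<Sum>i<n. h i) = \<mu> * (\<Sum>i<n. f i) - real k * (real k * (\<Sum>i<n. f i))"
      unfolding h_def by (simp add: sum_subtractf sum_distrib_left ap_sum[OF sg rg])
    then show ?thesis using fW ap_out[OF sg] unfolding W0_def h_def by auto
  qed
  have hh: "ip n h h = 0"
  proof (rule quad_zero[OF ip_nonneg])
    show "\<forall>t. 0 \<le> 2*t*ip n h h + t^2*(\<mu> * ip n h h - Q h)"
    proof
      fix t :: real
      define g where "g = (\<lambda>i. f i + t * h i)"
      have gW: "g \<in> W0" using fW hW unfolding W0_def g_def by (auto simp: sum.distrib sum_distrib_left[symmetric])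
      have apg: "ap n E g = (\<lambda>i. ap n E f i + t * ap n E h i)" unfolding g_def by (rule ext, rule ap_lin)
      have Qg0: "Q g = Q f + 2*t*ip n (ap n E f) (ap n E h) + t^2 * Q h"
        unfolding Q_def apg by (rule ip_expand)
      have "ip n (ap n E (ap n E f)) h = ip n (ap n E f) (ap n E h)" by (rule ap_sym[OF sg])
      then have Qg: "Q g = Q f + 2*t*ip n (ap n E (ap n E f)) h + t^2 * Q h" using Qg0 by simp
      have ig: "ip n g g = 1 + 2*t*ip n f h + t^2 * ip n h h"
        unfolding g_def ip_expand ff by simp
      have "ip n (\<lambda>i. \<mu> * f i - ap n E (ap n E f) i) h = \<mu> * ip n f h - ip n (ap n E (ap n E f)) h"
        by (rule ip_diff)
      then have hd: "ip n h h = \<mu> * ip n f h - ip n (ap n E (ap n E f)) h"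
        unfolding h_def[symmetric] .
      have "Q g \<le> \<mu> * ip n g g" by (rule psd[OF gW])
      then show "0 \<le> 2*t*ip n h h + t^2*(\<mu> * ip n h h - Q h)"
        unfolding Qg ig hd \<mu>_def[symmetric] by (simp add: algebra_simps)
    qed
  qed
  have A2: "ap n E (ap n E f) i = \<mu> * f i" if "i < n" for i
    using ip_zero[OF hh that] unfolding h_def by simp
  have sumf: "(\<Sum>i<n. f i) = 0" using fW unfolding W0_def by simp
  have sumapf: "(\<Sum>i<n. ap n E f i) = 0" using ap_sum[OF sg rg] sumf by simp
  obtain i0 where i0: "i0 < n" "f i0 \<noteq> 0"
  proof -
    have "\<not> (\<forall>i<n. f i = 0)"
    proof
      assume "\<forall>i<n. f i = 0"
      then have "ip n f f = 0" unfolding ip_def by (auto intro!: sum.neutral)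
      with ff show False by simp
    qed
    then show ?thesis using that by blast
  qed
  define r where "r = sqrt \<mu>"
  have r2: "r^2 = \<mu>" unfolding r_def using mu0 by simp
  show ?thesis
  proof (cases "\<exists>i<n. ap n E f i + r * f i \<noteq> 0")
    case True
    then obtain j where j: "j < n" "ap n E f j + r * f j \<noteq> 0" by blast
    define x where "x = (\<lambda>i. ap n E f i + r * f i)"
    have ev: "\<forall>i<n. ap n E x i = r * x i"
    proof (intro allI impI)
      fix i assume i: "i < n"
      have "ap n E x i = ap n E (ap n E f) i + r * ap n E f i" unfolding x_def by (rule ap_lin)
      also have "\<dots> = r * x i" using A2[OF i] r2 unfolding x_def by (simp add: algebra_simps power2_eq_square)
      finally show "ap n E x i = r * x i" .
    qed
    have sx: "(\<Sum>i<n. x i) = 0" unfolding x_def using sumf sumapf by (simp add: sum.distrib sum_distrib_left[symmetric])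
    show ?thesis
      by (rule eig_final[OF sg cn rg k2 sx, of j r]) (use j ev r2 muk x_def in auto)
  next
    case False
    have ev: "\<forall>i<n. ap n E f i = (- r) * f i" using False by (auto simp: algebra_simps)
    show ?thesis
      by (rule eig_final[OF sg cn rg k2 sumf i0 ev]) (use r2 muk in auto)
  qed
qed

end
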